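(* Let $(X,\|\cdot\|)$ be a convex normed space and let $S\subset X$ be a subset such that every sequence in $S$ has a subsequence converging in $X$. Then $S$ is a uniformly convex subset of $X$.
   Context: A normed space $X$ is convex if for all $u,v\in X$ with $u\ne v$ and $\|u\|=\|v\|=1$ we have $\|u+v\|<2$. A subset $S\subset X$ is called uniformly convex if for every $\varepsilon>0$ there exists $\delta\in(0,1)$ such that for all $u,v\in S$ with $\|u\|=\|v\|=1$ and $\|u-v\|\ge\varepsilon$ we have $\|u+v\|\le 2-\delta$ (in particular, a subset containing no unit vectors is uniformly convex). *)

theory Defs
  imports "HOL-Analysis.Analysis"
begin

definition convex_normed_space :: "'a::real_normed_vector itself \<Rightarrow> bool" where
  "convex_normed_space TYPE('a) \<longleftrightarrow>
     (\<forall>u v :: 'a. u \<noteq> v \<and> norm u = 1 \<and> norm v = 1 \<longrightarrow> norm (u + v) < 2)"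

definition uniformly_convex_subset :: "'a::real_normed_vector set \<Rightarrow> bool" where
  "uniformly_convex_subset S \<longleftrightarrow>
     (\<forall>\<epsilon>>0. \<exists>\<delta>. 0 < \<delta> \<and> \<delta> < 1 \<and>
        (\<forall>u\<in>S. \<forall>v\<in>S. norm u = 1 \<and> norm v = 1 \<and> norm (u - v) \<ge> \<epsilon>
           \<longrightarrow> norm (u + v) \<le> 2 - \<delta>))"

end

theory Submission
  imports Defs
begin

lemma lim2aux: "(\<lambda>n::nat. 2 - 1 / (real n + 2)) \<longlonglongrightarrow> (2::real)"
proof -
  have "(\<lambda>n::nat. 1 / (real n + 2)) \<longlonglongrightarrow> (0::real)"
    proof (intro tendsto_divide_0[OF tendsto_const] filterlim_at_top_imp_at_infinity)
    have "LIM n sequentially. 2 + real n :> at_top"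
      by (rule filterlim_tendsto_add_at_top[OF tendsto_const filterlim_real_sequentially])
    then show "LIM n sequentially. real n + 2 :> at_top" by (simp add: add.commute)
  qed 
  from tendsto_diff[OF tendsto_const this, of 2] show ?thesis by simp
qed

lemma negH:
  assumes "\<not> uniformly_convex_subset S"
  shows "\<exists>e>0. \<forall>d. 0 < d \<and> d < 1 \<longrightarrow>
     (\<exists>u\<in>S. \<exists>v\<in>S. norm u = 1 \<and> norm v = 1 \<and> norm (u - v) \<ge> e \<and> norm (u + v) > 2 - d)"
proof -
  from assms obtain e where e: "e > 0" and H: "\<forall>d. \<not>(0 < d \<and> d < 1 \<and>
        (\<forall>u\<in>S. \<forall>v\<in>S. norm u = 1 \<and> norm v = 1 \<and> norm (u - v) \<ge> e
           \<longrightarrow> norm (u + v) \<le> 2 - d))"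
    unfolding uniformly_convex_subset_def by blast
  show ?thesis
  proof (intro exI[of _ e] conjI allI impI e)
    fix d :: real assume "0 < d \<and> d < 1"
    with H have "\<not> (\<forall>u\<in>S. \<forall>v\<in>S. norm u = 1 \<and> norm v = 1 \<and> norm (u - v) \<ge> e
           \<longrightarrow> norm (u + v) \<le> 2 - d)" by blast
    then show "\<exists>u\<in>S. \<exists>v\<in>S. norm u = 1 \<and> norm v = 1 \<and> norm (u - v) \<ge> e \<and> norm (u + v) > 2 - d"
      by (auto simp: not_le)
  qed
qed


theorem mainTheorem6:
  fixes S :: "'a::real_normed_vector set"
  assumes "convex_normed_space TYPE('a)"
    and "\<And>x :: nat \<Rightarrow> 'a. (\<forall>n. x n \<in> S) \<Longrightarrow>
           \<exists>r l. strict_mono r \<and> (x \<circ> r) \<longlonglongrightarrow> l"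
  shows "uniformly_convex_subset S"
proof (rule ccontr)
  assume "\<not> uniformly_convex_subset S"
  from negH[OF this] obtain e :: real where e: "e > 0" and H: "\<forall>d. 0 < d \<and> d < 1 \<longrightarrow>
     (\<exists>u\<in>S. \<exists>v\<in>S. norm u = 1 \<and> norm v = 1 \<and> norm (u - v) \<ge> e \<and> norm (u + v) > 2 - d)"
    by blast
  define P where "P = (\<lambda>n u v. u \<in> S \<and> v \<in> S \<and> norm u = 1 \<and> norm v = 1 \<and> norm (u - v) \<ge> e
      \<and> norm (u + v) > 2 - 1 / (real n + 2))"
  have ex: "\<forall>n. \<exists>u v. P n u v"
  proof
    fix n :: nat
    have "0 < 1 / (real n + 2) \<and> 1 / (real n + 2) < (1::real)" by (auto simp: field_simps)
    with H have "\<exists>u\<in>S. \<exists>v\<in>S. norm u = 1 \<and> norm v = 1 \<and> norm (u - v) \<ge> e \<and> norm (u + v) > 2 - 1 / (real n + 2)"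
      by blast
    then show "\<exists>u v. P n u v" unfolding P_def by blast
  qed
  obtain u where "\<forall>n. \<exists>v. P n (u n) v" using choice[OF ex] by blast
  from choice[OF this] obtain v where uv: "\<And>n. P n (u n) (v n)" by blast
  have "\<forall>n. u n \<in> S" using uv by (simp add: P_def)
  from assms(2)[OF this] obtain r a where r: "strict_mono r" and a: "(u \<circ> r) \<longlonglongrightarrow> a" by blast
  have "\<forall>n. (v \<circ> r) n \<in> S" using uv by (simp add: P_def)
  from assms(2)[OF this] obtain r2 b where r2: "strict_mono r2" and b: "(v \<circ> r \<circ> r2) \<longlonglongrightarrow> b" by blast
  define s where "s = r \<circ> r2"
  have s: "strict_mono s" using r r2 by (simp add: s_def strict_mono_o)
  have ua: "(\<lambda>n. u (s n)) \<longlonglongrightarrow> a"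
    using LIMSEQ_subseq_LIMSEQ[OF a r2] by (simp add: s_def o_def)
  have vb: "(\<lambda>n. v (s n)) \<longlonglongrightarrow> b" using b by (simp add: s_def o_def)
  have l1: "(\<lambda>n. norm (u (s n))) \<longlonglongrightarrow> norm a" by (intro tendsto_intros ua)
  have "(\<lambda>n. norm (u (s n))) = (\<lambda>n. 1)" using uv by (simp add: P_def)
  with l1 have "(\<lambda>n. 1::real) \<longlonglongrightarrow> norm a" by simp
  hence na: "norm a = 1" using LIMSEQ_unique[OF tendsto_const] by metis
  have l2: "(\<lambda>n. norm (v (s n))) \<longlonglongrightarrow> norm b" by (intro tendsto_intros vb)
  have "(\<lambda>n. norm (v (s n))) = (\<lambda>n. 1)" using uv by (simp add: P_def)
  with l2 have "(\<lambda>n. 1::real) \<longlonglongrightarrow> norm b" by simp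
  hence nb: "norm b = 1" using LIMSEQ_unique[OF tendsto_const] by metis
  have l3: "(\<lambda>n. norm (u (s n) - v (s n))) \<longlonglongrightarrow> norm (a - b)" by (intro tendsto_intros ua vb)
  have "\<And>n. e \<le> norm (u (s n) - v (s n))" using uv by (simp add: P_def)
  hence "e \<le> norm (a - b)"
    by (intro tendsto_le[OF _ l3 tendsto_const]) auto
  hence ne: "a \<noteq> b" using e by auto
  have lim1: "(\<lambda>n. norm (u (s n) + v (s n))) \<longlonglongrightarrow> norm (a + b)" by (intro tendsto_intros ua vb)
  have "2 - 1 / (real n + 2) \<le> norm (u (s n) + v (s n))" for n
  proof -
    have "n \<le> s n" using s by (rule seq_suble)
    hence "1 / (real (s n) + 2) \<le> 1 / (real n + 2)" by (intro divide_left_mono) auto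
    moreover have "norm (u (s n) + v (s n)) > 2 - 1 / (real (s n) + 2)" using uv by (simp add: P_def)
    ultimately show ?thesis by linarith
  qed
  hence "2 \<le> norm (a + b)"
    by (intro tendsto_le[OF _ lim1 lim2aux]) auto
  moreover have "norm (a + b) < 2"
    using assms(1) ne na nb unfolding convex_normed_space_def by blast
  ultimately show False by simp
qed

end
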